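(* Let $n\in\mathbb{N}$, $1<p<q$, $0<\omega<\omega_{p,q}$, and let $u$ be the positive solution of $$u''+\frac{n-1}{r}u'+f(u)=0\ (r>0),\qquad u'(0)=0,\qquad \lim_{r\to\infty}u(r)=0,$$ with $f(u)=-\omega u+u^p-u^q$. Define $$P(r)=r^n\big[u'(r)^2+2F(u(r))\big]+(n-2)r^{n-1}u(r)u'(r),\qquad F(u)=\int_0^u f(s)\,ds.$$ Then $P(r)>0$ for all $r>0$.
   Context: $\omega_{p,q}=\frac{2(q-p)}{(p+1)(q-1)}\left[\frac{(p-1)(q+1)}{(p+1)(q-1)}\right]^{\frac{p-1}{q-p}}$; for such $\omega$ the positive solution exists and is unique. *)

theory Defs
  imports "HOL-Analysis.Analysis"
begin

definition omega_pq :: "real \<Rightarrow> real \<Rightarrow> real" where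
  "omega_pq p q = 2 * (q - p) / ((p + 1) * (q - 1)) *
     (((p - 1) * (q + 1)) / ((p + 1) * (q - 1))) powr ((p - 1) / (q - p))"

definition nonlin :: "real \<Rightarrow> real \<Rightarrow> real \<Rightarrow> real \<Rightarrow> real" where
  "nonlin \<omega> p q s = - \<omega> * s + s powr p - s powr q"

definition Prim :: "real \<Rightarrow> real \<Rightarrow> real \<Rightarrow> real \<Rightarrow> real" where
  "Prim \<omega> p q x = integral {0..x} (nonlin \<omega> p q)"

definition Pohozaev :: "nat \<Rightarrow> real \<Rightarrow> real \<Rightarrow> real \<Rightarrow> (real \<Rightarrow> real) \<Rightarrow> (real \<Rightarrow> real) \<Rightarrow> real \<Rightarrow> real" where
  "Pohozaev n \<omega> p q u u' r =
     r ^ n * ((u' r)\<^sup>2 + 2 * Prim \<omega> p q (u r)) + (real n - 2) * r ^ (n - 1) * u r * u' r"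

end

theory Submission
  imports Defs
begin


definition kk :: "real \<Rightarrow> real \<Rightarrow> real \<Rightarrow> real \<Rightarrow> real" where
  "kk \<omega> p q s = - \<omega> + s powr (p - 1) - s powr (q - 1)"

definition Fc :: "real \<Rightarrow> real \<Rightarrow> real \<Rightarrow> real \<Rightarrow> real" where
  "Fc \<omega> p q x = - \<omega> * x^2 / 2 + x powr (p+1) / (p+1) - x powr (q+1) / (q+1)"

definition gg :: "nat \<Rightarrow> real \<Rightarrow> real \<Rightarrow> real \<Rightarrow> real \<Rightarrow> real" where
  "gg n \<omega> p q s = - 2*\<omega> + (2*real n/(p+1) - (real n - 2)) * s powr (p-1)
      + ((real n - 2) - 2 * real n/(q+1)) * s powr (q-1)"

lemma gg_alg: "(p::real)>1 \<Longrightarrow> q>1 \<Longrightarrow> 2*N*(-w* s^2/2 + s^2*A/(p+1) - s^2*B/(q+1)) - (N-2)* s*(-w* s + s*A - s*B) = s^2*(-2*w + (2*N/(p+1) - (N-2))*A + ((N-2) - 2*N/(q+1))*B)"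
  unfolding divide_inverse by algebra

lemma powr_split1: "(x::real) > 0 \<Longrightarrow> x powr a = x * x powr (a - 1)"
  using powr_add[of x 1 "a - 1"] by (simp add: powr_one)

lemma powr_split2: "(x::real) > 0 \<Longrightarrow> x powr a = x^2 * x powr (a - 2)"
  using powr_add[of x 2 "a - 2"] by (simp add: powr_realpow[of x 2, simplified])

context
  fixes p q \<omega> :: real
  assumes pq1: "1 < p" and pq2: "p < q" and om0: "0 < \<omega>"
begin

lemma nonlin_eq: "s > 0 \<Longrightarrow> nonlin \<omega> p q s = s * kk \<omega> p q s"
  unfolding nonlin_def kk_def using powr_split1[of s p] powr_split1[of s q]
  by (simp add: algebra_simps)

lemma Fc_deriv: assumes s: "s > 0"
  shows "(Fc \<omega> p q has_real_derivative nonlin \<omega> p q s) (at s)"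
proof -
  have h1: "((\<lambda>x. x powr (p+1)) has_real_derivative (p+1) * s powr (p+1-1)) (at s)"
    by (rule has_real_derivative_powr[OF s])
  have h2: "((\<lambda>x. x powr (q+1)) has_real_derivative (q+1) * s powr (q+1-1)) (at s)"
    by (rule has_real_derivative_powr[OF s])
  have h3: "((\<lambda>x. - \<omega> * x^2 / 2) has_real_derivative - \<omega> * (2 * s) / 2) (at s)"
    by (auto intro!: derivative_eq_intros)
  have "((\<lambda>x. - \<omega> * x^2 / 2 + x powr (p+1) / (p+1) - x powr (q+1) / (q+1)) has_real_derivative
     (- \<omega> * (2 * s) / 2 + (p+1) * s powr (p+1-1) / (p+1) - (q+1) * s powr (q+1-1) / (q+1))) (at s)"
    by (intro DERIV_diff DERIV_add h3 DERIV_cdivide h1 h2)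
  moreover have "(- \<omega> * (2 * s) / 2 + (p+1) * s powr (p+1-1) / (p+1) - (q+1) * s powr (q+1-1) / (q+1))
     = nonlin \<omega> p q s" proof -
    have "p+1 \<noteq> 0" "q+1 \<noteq> 0" using pq1 pq2 by auto
    then show ?thesis by (simp add: nonlin_def)
  qed
  ultimately show ?thesis unfolding Fc_def[abs_def] by simp
qed

lemma Fc_cont: "continuous_on {0..} (Fc \<omega> p q)"
proof -
  have a: "continuous_on {0..} (\<lambda>x::real. x powr (p+1))"
    by (rule continuous_on_powr') (use pq1 in \<open>auto intro: continuous_intros\<close>)
  have b: "continuous_on {0..} (\<lambda>x::real. x powr (q+1))"
    by (rule continuous_on_powr') (use pq1 pq2 in \<open>auto intro: continuous_intros\<close>)
  show ?thesis unfolding Fc_def[abs_def]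
    by (intro continuous_intros a b) (use pq1 pq2 in auto)
qed

lemma Fc0: "Fc \<omega> p q 0 = 0" by (simp add: Fc_def)

lemma Prim_eq: assumes x: "x \<ge> 0" shows "Prim \<omega> p q x = Fc \<omega> p q x"
proof -
  have "(nonlin \<omega> p q has_integral (Fc \<omega> p q x - Fc \<omega> p q 0)) {0..x}"
  proof (rule fundamental_theorem_of_calculus_interior[OF x])
    show "continuous_on {0..x} (Fc \<omega> p q)"
      using Fc_cont by (rule continuous_on_subset) auto
    show "(Fc \<omega> p q has_vector_derivative nonlin \<omega> p q y) (at y)" if "y \<in> {0<..<x}" for y
      using Fc_deriv[of y] that by (simp add: has_real_derivative_iff_has_vector_derivative)
  qed
  then show ?thesis unfolding Prim_def using Fc0 by (simp add: integral_unique)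
qed

lemma GG_eq: assumes s: "s > 0"
  shows "2 * real n * Fc \<omega> p q s - (real n - 2) * s * nonlin \<omega> p q s = s^2 * gg n \<omega> p q s"
proof -
  have e1: "s powr (p+1) = s^2 * s powr (p - 1)" using powr_split2[OF s, of "p+1"] by simp
  have e2: "s powr (q+1) = s^2 * s powr (q - 1)" using powr_split2[OF s, of "q+1"] by simp
  have e3: "s powr p = s * s powr (p - 1)" using powr_split1[OF s, of p] by simp
  have e4: "s powr q = s * s powr (q - 1)" using powr_split1[OF s, of q] by simp
  show ?thesis unfolding Fc_def nonlin_def gg_def e1 e2 e3 e4
    using gg_alg[of p q "real n" \<omega> s "s powr (p-1)" "s powr (q-1)"] pq1 pq2
    by (simp add: algebra_simps)
qed

end


definition cc :: "real \<Rightarrow> real \<Rightarrow> real" where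
  "cc p q = ((p-1)/(q-1)) powr (1/(q-p))"

definition gL :: "nat \<Rightarrow> real \<Rightarrow> real \<Rightarrow> real \<Rightarrow> real" where
  "gL n p q s = (2*real n/(p+1) - (real n - 2)) * (p-1) + ((real n - 2) - 2 * real n/(q+1)) * (q-1) * s powr (q-p)"

context
  fixes p q \<omega> :: real
  assumes pq1: "1 < p" and pq2: "p < q" and om0: "0 < \<omega>"
begin

lemma cc_pos: "cc p q > 0" using pq1 pq2 by (simp add: cc_def)

lemma cc_pow: "cc p q powr (q - p) = (p-1)/(q-1)"
  using pq1 pq2 by (simp add: cc_def powr_powr)

lemma kk_deriv: assumes s: "s > 0" shows "(kk \<omega> p q has_real_derivative
     ((p-1) * s powr (p-1-1) - (q-1) * s powr (q-1-1))) (at s)"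
proof -
  have "((\<lambda>s. -\<omega> + s powr (p-1) - s powr (q-1)) has_real_derivative
     (0 + (p-1) * s powr (p-1-1) - (q-1) * s powr (q-1-1))) (at s)"
    by (intro DERIV_diff DERIV_add DERIV_const has_real_derivative_powr) (use s in auto)
  then show ?thesis unfolding kk_def[abs_def] by simp
qed

lemma kk_cont: assumes "a > 0" shows "continuous_on {a..b} (kk \<omega> p q)"
proof (rule continuous_at_imp_continuous_on, rule ballI)
  fix x assume "x \<in> {a..b}"
  then have "x > 0" using assms by auto
  then show "isCont (kk \<omega> p q) x" by (rule DERIV_isCont[OF kk_deriv])
qed

lemma kk_deriv_sign:
  assumes s: "s > 0"
  shows "(p-1) * s powr (p-1-1) - (q-1) * s powr (q-1-1)
           = s powr (p - 2) * ((p-1) - (q-1) * s powr (q - p))"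
proof -
  have "s powr (q-1-1) = s powr (p-2) * s powr (q-p)"
    using powr_add[of s "p-2" "q-p"] by simp
  then show ?thesis by (simp add: algebra_simps)
qed

lemma kk_inc: assumes "0 < x" "x < y" "y \<le> cc p q" shows "kk \<omega> p q x < kk \<omega> p q y"
proof (rule DERIV_pos_imp_increasing_open[OF assms(2)])
  show "continuous_on {x..y} (kk \<omega> p q)" using kk_cont assms by auto
  fix t assume t: "x < t" "t < y"
  then have t0: "t > 0" "t < cc p q" using assms by auto
  have "t powr (q - p) < cc p q powr (q - p)"
    using t0 pq2 by (intro powr_less_mono2) auto
  then have "(q-1) * t powr (q - p) < p - 1" using cc_pow pq1 pq2 by (simp add: field_simps)
  then have "0 < t powr (p - 2) * ((p-1) - (q-1) * t powr (q - p))"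
    using t0 by simp
  then show "\<exists>y. (kk \<omega> p q has_real_derivative y) (at t) \<and> 0 < y"
    using kk_deriv[OF t0(1)] kk_deriv_sign[OF t0(1)] by auto
qed

lemma kk_dec: assumes "cc p q \<le> x" "x < y" shows "kk \<omega> p q y < kk \<omega> p q x"
proof (rule DERIV_neg_imp_decreasing_open[OF assms(2)])
  have x0: "x > 0" using cc_pos assms by auto
  show "continuous_on {x..y} (kk \<omega> p q)" using kk_cont x0 by auto
  fix t assume t: "x < t" "t < y"
  then have t0: "t > 0" "t > cc p q" using assms x0 by auto
  have "t powr (q - p) > cc p q powr (q - p)"
    using t0 pq2 cc_pos by (intro powr_less_mono2) auto
  then have "(q-1) * t powr (q - p) > p - 1" using cc_pow pq1 pq2 by (simp add: field_simps)
  then have "t powr (p - 2) * ((p-1) - (q-1) * t powr (q - p)) < 0"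
    using t0 by (simp add: mult_pos_neg)
  then show "\<exists>y. (kk \<omega> p q has_real_derivative y) (at t) \<and> y < 0"
    using kk_deriv[OF t0(1)] kk_deriv_sign[OF t0(1)] by auto
qed

lemma kk_le_c: "s > 0 \<Longrightarrow> kk \<omega> p q s \<le> kk \<omega> p q (cc p q)"
  using kk_inc[of s "cc p q"] kk_dec[of "cc p q" s] by (cases "s < cc p q"; cases "s = cc p q") auto

lemma Fc_mono: assumes "0 \<le> a" "a \<le> b" "\<And>t. a < t \<Longrightarrow> t < b \<Longrightarrow> 0 \<le> kk \<omega> p q t"
  shows "Fc \<omega> p q a \<le> Fc \<omega> p q b"
proof (rule DERIV_nonneg_imp_increasing_open[OF assms(2)])
  show "continuous_on {a..b} (Fc \<omega> p q)"
    using Fc_cont[OF pq1 pq2 om0] by (rule continuous_on_subset) (use assms in auto)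
  fix t assume t: "a < t" "t < b"
  then have t0: "t > 0" using assms by auto
  show "\<exists>y. (Fc \<omega> p q has_real_derivative y) (at t) \<and> 0 \<le> y"
    using Fc_deriv[OF pq1 pq2 om0 t0] nonlin_eq[OF pq1 pq2 om0 t0] assms(3)[OF t] t0 by auto
qed

lemma Fc_anti: assumes "0 \<le> a" "a \<le> b" "\<And>t. a < t \<Longrightarrow> t < b \<Longrightarrow> kk \<omega> p q t \<le> 0"
  shows "Fc \<omega> p q b \<le> Fc \<omega> p q a"
proof -
  have "(\<lambda>x. - Fc \<omega> p q x) a \<le> (\<lambda>x. - Fc \<omega> p q x) b"
  proof (rule DERIV_nonneg_imp_increasing_open[OF assms(2)])
    show "continuous_on {a..b} (\<lambda>x. - Fc \<omega> p q x)"
      using Fc_cont[OF pq1 pq2 om0] by (intro continuous_intros) (rule continuous_on_subset, use assms in auto)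
    fix t assume t: "a < t" "t < b"
    then have t0: "t > 0" using assms by auto
    have "nonlin \<omega> p q t \<le> 0" using nonlin_eq[OF pq1 pq2 om0 t0] assms(3)[OF t] t0
      by (simp add: mult_nonneg_nonpos)
    then show "\<exists>y. ((\<lambda>x. - Fc \<omega> p q x) has_real_derivative y) (at t) \<and> 0 \<le> y"
      using DERIV_minus[OF Fc_deriv[OF pq1 pq2 om0 t0]] by auto
  qed
  then show ?thesis by simp
qed

lemma Fc_santi: assumes "0 \<le> a" "a < b" "\<And>t. a < t \<Longrightarrow> t < b \<Longrightarrow> kk \<omega> p q t < 0"
  shows "Fc \<omega> p q b < Fc \<omega> p q a"
proof (rule DERIV_neg_imp_decreasing_open[OF assms(2)])
  show "continuous_on {a..b} (Fc \<omega> p q)"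
    using Fc_cont[OF pq1 pq2 om0] by (rule continuous_on_subset) (use assms in auto)
  fix t assume t: "a < t" "t < b"
  then have t0: "t > 0" using assms by auto
  show "\<exists>y. (Fc \<omega> p q has_real_derivative y) (at t) \<and> y < 0"
    using Fc_deriv[OF pq1 pq2 om0 t0] nonlin_eq[OF pq1 pq2 om0 t0] assms(3)[OF t] t0
    by (auto simp: mult_pos_neg)
qed

lemma kk_small: "\<exists>\<sigma>>0. \<forall>s. 0 < s \<longrightarrow> s \<le> \<sigma> \<longrightarrow> kk \<omega> p q s \<le> - \<omega> / 2"
proof (intro exI conjI allI impI)
  let ?\<sigma> = "(\<omega>/2) powr (1/(p-1))"
  show "?\<sigma> > 0" using om0 by simp
  fix s assume s: "0 < s" "s \<le> ?\<sigma>"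
  have "s powr (p-1) \<le> ?\<sigma> powr (p-1)" using s pq1 by (intro powr_mono2) auto
  also have "\<dots> = \<omega>/2" using pq1 om0 by (simp add: powr_powr)
  finally show "kk \<omega> p q s \<le> - \<omega> / 2" unfolding kk_def using powr_ge_zero[of s "q-1"] by linarith
qed

end


context
  fixes p q \<omega> :: real and n :: nat
  assumes pq1: "1 < p" and pq2: "p < q" and om0: "0 < \<omega>"
begin

lemma gg_deriv: assumes s: "s > 0"
  shows "(gg n \<omega> p q has_real_derivative s powr (p - 2) * gL n p q s) (at s)"
proof -
  let ?a = "2*real n/(p+1) - (real n - 2)" and ?b = "(real n - 2) - 2 * real n/(q+1)"
  have "((\<lambda>s. - 2*\<omega> + ?a * s powr (p-1) + ?b * s powr (q-1)) has_real_derivative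
     (0 + ?a * ((p-1) * s powr (p-1-1)) + ?b * ((q-1) * s powr (q-1-1)))) (at s)"
    by (intro DERIV_diff DERIV_add DERIV_const DERIV_cmult has_real_derivative_powr) (use s in auto)
  moreover have e: "s powr (q-1-1) = s powr (p-2) * s powr (q-p)"
    using powr_add[of s "p-2" "q-p"] by simp
  moreover have e0: "p-1-1 = p-2" by simp
  moreover have "0 + ?a * ((p-1) * s powr (p-1-1)) + ?b * ((q-1) * s powr (q-1-1)) = s powr (p - 2) * gL n p q s"
    unfolding gL_def e e0 unfolding divide_inverse by algebra
  ultimately show ?thesis unfolding gg_def[abs_def] by simp
qed

lemma gg_small: "\<exists>\<sigma>>0. \<forall>s. 0 < s \<longrightarrow> s \<le> \<sigma> \<longrightarrow> gg n \<omega> p q s < 0"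
proof -
  let ?a = "2*real n/(p+1) - (real n - 2)" and ?b = "(real n - 2) - 2 * real n/(q+1)"
  define K where "K = \<bar>?a\<bar> + \<bar>?b\<bar> + 1"
  have K: "K > 0" unfolding K_def by simp
  define \<sigma> where "\<sigma> = min 1 ((\<omega>/K) powr (1/(p-1)))"
  show ?thesis
  proof (intro exI conjI allI impI)
    show "\<sigma> > 0" unfolding \<sigma>_def using om0 K by simp
    fix s assume s: "0 < s" "s \<le> \<sigma>"
    have s1: "s \<le> 1" using s unfolding \<sigma>_def by simp
    have "s powr (p-1) \<le> ((\<omega>/K) powr (1/(p-1))) powr (p-1)"
      using s pq1 unfolding \<sigma>_def by (intro powr_mono2) auto
    also have "\<dots> = \<omega>/K" using pq1 om0 K by (simp add: powr_powr)
    finally have h1: "s powr (p-1) \<le> \<omega>/K" .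
    have h2: "s powr (q-1) \<le> s powr (p-1)" using s s1 pq2 by (intro powr_mono') auto
    have h3: "?a * s powr (p-1) \<le> \<bar>?a\<bar> * s powr (p-1)"
      by (intro mult_right_mono) auto
    have h4: "?b * s powr (q-1) \<le> \<bar>?b\<bar> * s powr (p-1)"
    proof -
      have "?b * s powr (q-1) \<le> \<bar>?b\<bar> * s powr (q-1)" by (intro mult_right_mono) auto
      also have "\<dots> \<le> \<bar>?b\<bar> * s powr (p-1)" using h2 by (intro mult_left_mono) auto
      finally show ?thesis .
    qed
    have "(\<bar>?a\<bar> + \<bar>?b\<bar>) * s powr (p-1) \<le> K * s powr (p-1)"
      unfolding K_def by (intro mult_right_mono) auto
    also have "\<dots> \<le> K * (\<omega>/K)" using h1 K by (intro mult_left_mono) auto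
    also have "\<dots> = \<omega>" using K by simp
    finally have "(\<bar>?a\<bar> + \<bar>?b\<bar>) * s powr (p-1) \<le> \<omega>" .
    then show "gg n \<omega> p q s < 0" unfolding gg_def using h3 h4 om0
      by (simp add: algebra_simps)
  qed
qed

lemma gL_mono:
  assumes "0 < s" "s \<le> t"
  shows "(real n - 2) - 2 * real n/(q+1) \<le> 0 \<Longrightarrow> gL n p q t \<le> gL n p q s"
    and "(real n - 2) - 2 * real n/(q+1) \<ge> 0 \<Longrightarrow> gL n p q s \<le> gL n p q t"
proof -
  have st: "s powr (q-p) \<le> t powr (q-p)" using assms pq2 by (intro powr_mono2) auto
  have q1: "q - 1 > 0" using pq1 pq2 by simp
  show "(real n - 2) - 2 * real n/(q+1) \<le> 0 \<Longrightarrow> gL n p q t \<le> gL n p q s"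
    unfolding gL_def using st q1
    by (simp add: mult_left_mono_neg mult.assoc mult_left_mono)
  show "(real n - 2) - 2 * real n/(q+1) \<ge> 0 \<Longrightarrow> gL n p q s \<le> gL n p q t"
    unfolding gL_def using st q1
    by (simp add: mult.assoc mult_left_mono)
qed

lemma gg_mvt: assumes "0 < a" "a < b"
  shows "\<exists>t. a < t \<and> t < b \<and> gg n \<omega> p q b - gg n \<omega> p q a = (b - a) * (t powr (p-2) * gL n p q t)"
  using MVT2[OF assms(2), of "gg n \<omega> p q" "\<lambda>t. t powr (p-2) * gL n p q t"] gg_deriv assms by force

lemma sign_extract_neg:
  assumes "D < 0" "a < b" "(t::real) > 0" "D = (b - a) * (t powr (p-2) * L)" shows "L < 0"
proof (rule ccontr)
  assume "\<not> L < 0"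
  then have "0 \<le> (b - a) * (t powr (p-2) * L)" using assms by (intro mult_nonneg_nonneg) auto
  then show False using assms by simp
qed

lemma sign_extract_pos:
  assumes "D > 0" "a < b" "(t::real) > 0" "D = (b - a) * (t powr (p-2) * L)" shows "L > 0"
proof (rule ccontr)
  assume "\<not> L > 0"
  then have "(b - a) * (t powr (p-2) * L) \<le> 0" using assms
    by (intro mult_nonneg_nonpos) (auto intro: mult_nonneg_nonpos)
  then show False using assms by simp
qed

lemma gg_trap: assumes "0 < y" "y \<le> x" "x \<le> z" "gg n \<omega> p q x \<le> 0" "0 < gg n \<omega> p q z"
  shows "gg n \<omega> p q y \<le> 0"
proof (rule ccontr)
  assume "\<not> ?thesis"
  then have gy: "gg n \<omega> p q y > 0" by simp
  have yx: "y < x" using assms gy by (cases "y = x") auto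
  have xz: "x < z" using assms by (cases "x = z") auto
  obtain t1 where t1: "y < t1" "t1 < x" "gg n \<omega> p q x - gg n \<omega> p q y = (x - y) * (t1 powr (p-2) * gL n p q t1)"
    using gg_mvt[OF assms(1) yx] by auto
  have L1: "gL n p q t1 < 0" using assms gy t1 yx
    by (intro sign_extract_neg[OF _ yx _ t1(3)]) auto
  obtain t2 where t2: "x < t2" "t2 < z" "gg n \<omega> p q z - gg n \<omega> p q x = (z - x) * (t2 powr (p-2) * gL n p q t2)"
    using gg_mvt[of x z] assms yx xz by auto
  have L2: "gL n p q t2 > 0" using assms gy t2 xz yx
    by (intro sign_extract_pos[OF _ xz _ t2(3)]) auto
  show False
  proof (cases "(real n - 2) - 2 * real n/(q+1) \<le> 0")
    case True
    then show False using gL_mono(1)[of t1 t2] t1 t2 L1 L2 assms by auto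
  next
    case False
    obtain \<sigma> where \<sigma>: "\<sigma> > 0" "\<And>s. 0 < s \<Longrightarrow> s \<le> \<sigma> \<Longrightarrow> gg n \<omega> p q s < 0"
      using gg_small by auto
    define e where "e = min \<sigma> (y/2)"
    have e: "0 < e" "e < y" "gg n \<omega> p q e < 0" using \<sigma> assms unfolding e_def by auto
    obtain t0 where t0: "e < t0" "t0 < y" "gg n \<omega> p q y - gg n \<omega> p q e = (y - e) * (t0 powr (p-2) * gL n p q t0)"
      using gg_mvt[of e y] e by auto
    have L0: "gL n p q t0 > 0" using e gy t0
      by (intro sign_extract_pos[OF _ e(2) _ t0(3)]) auto
    show False using gL_mono(2)[of t0 t1] False t0 t1 L0 L1 e by auto
  qed
qed

end


context
  fixes p q \<omega> :: real
  assumes pq1: "1 < p" and pq2: "p < q" and om0: "0 < \<omega>" and omb: "\<omega> < omega_pq p q"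
begin

lemma Fc_s0: "\<exists>s0>0. Fc \<omega> p q s0 > 0"
proof -
  define X where "X = (p-1)*(q+1)/((p+1)*(q-1))"
  have X: "X > 0" unfolding X_def using pq1 pq2 by simp
  define s0 where "s0 = X powr (1/(q-p))"
  define Y where "Y = X powr ((p-1)/(q-p))"
  have s0: "s0 > 0" unfolding s0_def using X by simp
  have Y: "Y > 0" unfolding Y_def using X by simp
  have e1: "s0 powr (p-1) = Y" unfolding s0_def Y_def using X by (simp add: powr_powr)
  have e2: "s0 powr (q-p) = X" unfolding s0_def using X pq2 by (simp add: powr_powr)
  have e3: "s0 powr (q-1) = Y * X" using powr_add[of s0 "p-1" "q-p"] e1 e2 by simp
  have Fe: "Fc \<omega> p q s0 = s0^2 * (-\<omega>/2 + Y/(p+1) - Y*X/(q+1))"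
    unfolding Fc_def using powr_split2[OF s0, of "p+1"] powr_split2[OF s0, of "q+1"] e1 e3
    by (simp add: algebra_simps)
  have om: "omega_pq p q = 2*(q-p)/((p+1)*(q-1)) * Y"
    unfolding omega_pq_def Y_def X_def by simp
  have nz: "p+1 \<noteq> 0" "q-1 \<noteq> 0" "q+1 \<noteq> 0" "(p+1)*(q-1) \<noteq> 0" using pq1 pq2 by auto
  have "X = ((p-1)/((p+1)*(q-1))) * (q+1)" unfolding X_def by simp
  then have "X/(q+1) = (p-1)/((p+1)*(q-1))" using nz by simp
  then have a1: "Y*X/(q+1) = Y*(p-1)/((p+1)*(q-1))" by (metis times_divide_eq_right)
  have b1: "Y/(p+1) = Y*(q-1)/((p+1)*(q-1))" using nz by simp
  have b2: "Y*(q-1) - Y*(p-1) = Y*(q-p)" by algebra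
  have a2: "Y/(p+1) - Y*(p-1)/((p+1)*(q-1)) = Y*(q-p)/((p+1)*(q-1))"
    unfolding b1 diff_divide_distrib[symmetric] b2 ..
  have "-\<omega>/2 + Y/(p+1) - Y*X/(q+1) = (omega_pq p q - \<omega>)/2"
    unfolding om using a1 a2 by (simp add: field_simps)
  also have "\<dots> > 0" using omb by simp
  finally show ?thesis using Fe s0 by (intro exI[of _ s0]) simp
qed

lemma beta_ex: "\<exists>\<beta>. cc p q < \<beta> \<and> kk \<omega> p q \<beta> = 0 \<and> Fc \<omega> p q \<beta> > 0"
proof -
  obtain s0 where s0: "s0 > 0" "Fc \<omega> p q s0 > 0" using Fc_s0 by auto
  have c0: "cc p q > 0" using cc_pos[OF pq1 pq2 om0] .
  have kc: "kk \<omega> p q (cc p q) > 0"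
  proof (rule ccontr)
    assume "\<not> ?thesis"
    then have "\<And>t. 0 < t \<Longrightarrow> kk \<omega> p q t \<le> 0" using kk_le_c[OF pq1 pq2 om0] by force
    then have "Fc \<omega> p q s0 \<le> Fc \<omega> p q 0" using s0 by (intro Fc_anti[OF pq1 pq2 om0]) auto
    then show False using s0 Fc0[OF pq1 pq2 om0] by simp
  qed
  define T where "T = cc p q + 1"
  have T1: "T \<ge> 1" unfolding T_def using c0 by simp
  have "T powr (p-1) \<le> T powr (q-1)" using T1 pq2 by (intro powr_mono) auto
  then have kT: "kk \<omega> p q T \<le> 0" unfolding kk_def using om0 by simp
  obtain \<beta> where b: "cc p q \<le> \<beta>" "\<beta> \<le> T" "kk \<omega> p q \<beta> = 0"
    using IVT2'[of "kk \<omega> p q" T 0 "cc p q"] kT kc T_def kk_cont[OF pq1 pq2 om0 c0] by force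
  have bc: "cc p q < \<beta>" using b kc by (cases "\<beta> = cc p q") auto
  have kneg: "\<And>t. \<beta> < t \<Longrightarrow> kk \<omega> p q t < 0"
    using kk_dec[OF pq1 pq2 om0] b by (metis order.strict_iff_order order_trans) 
  have "Fc \<omega> p q \<beta> > 0"
  proof (cases "\<beta> \<le> s0")
    case True
    have "Fc \<omega> p q s0 \<le> Fc \<omega> p q \<beta>"
      using True bc c0 kneg by (intro Fc_anti[OF pq1 pq2 om0]) (auto intro: less_imp_le)
    then show ?thesis using s0 by simp
  next
    case False
    show ?thesis
    proof (cases "kk \<omega> p q s0 \<ge> 0")
      case True
      have "Fc \<omega> p q s0 \<le> Fc \<omega> p q \<beta>"
      proof (rule Fc_mono[OF pq1 pq2 om0])
        fix t assume t: "s0 < t" "t < \<beta>"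
        show "0 \<le> kk \<omega> p q t"
        proof (cases "t \<le> cc p q")
          case True
          then show ?thesis using kk_inc[OF pq1 pq2 om0, of s0 t] s0 t \<open>0 \<le> kk \<omega> p q s0\<close> by auto
        next
          case False
          then show ?thesis using kk_dec[OF pq1 pq2 om0, of t \<beta>] t b by auto
        qed
      qed (use s0 False in auto)
      then show ?thesis using s0 by simp
    next
      case k: False
      have sc: "s0 < cc p q"
      proof (rule ccontr)
        assume "\<not> s0 < cc p q"
        then have "kk \<omega> p q \<beta> < kk \<omega> p q s0" using kk_dec[OF pq1 pq2 om0, of s0 \<beta>] False by auto
        then show False using b k by simp
      qed
      have "Fc \<omega> p q s0 \<le> Fc \<omega> p q 0"
      proof (rule Fc_anti[OF pq1 pq2 om0])
        fix t assume t: "0 < t" "t < s0"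
        show "kk \<omega> p q t \<le> 0" using kk_inc[OF pq1 pq2 om0, of t s0] t sc k by auto
      qed (use s0 in auto)
      then show ?thesis using s0 Fc0[OF pq1 pq2 om0] by simp
    qed
  qed
  then show ?thesis using bc b by auto
qed

end


lemma nonlin_cont: "continuous_on {0<..} (nonlin \<omega> p q)"
  unfolding nonlin_def[abs_def] by (intro continuous_intros) auto

lemma cont_bound: assumes "compact K" "continuous_on K g"
  shows "\<exists>B>0. \<forall>x\<in>K. \<bar>g x :: real\<bar> \<le> B"
proof -
  have "bounded (g ` K)" by (rule compact_imp_bounded[OF compact_continuous_image[OF assms(2,1)]])
  then obtain B where "B > 0" "\<forall>y\<in>g ` K. norm y \<le> B" by (auto simp: bounded_pos)
  then show ?thesis by auto
qed

lemma pow_deriv_aux: assumes "n \<ge> 1" "(r::real) > 0"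
  shows "real (n - 1) * r ^ (n - 1 - 1) = (real n - 1) * r ^ (n - 1) / r"
proof (cases "n = 1")
  case True then show ?thesis by simp
next
  case False
  then have "n - 1 = Suc (n - 1 - 1)" using assms by simp
  then have "r ^ (n - 1) = r * r ^ (n - 1 - 1)" by (metis power_Suc)
  then show ?thesis using assms by (simp add: of_nat_diff)
qed

locale ode =
  fixes n :: nat and p q \<omega> :: real and u u' u'' :: "real \<Rightarrow> real"
  assumes n: "n \<ge> 1"
    and pq1: "1 < p" and pq2: "p < q"
    and om0: "0 < \<omega>" and omb: "\<omega> < omega_pq p q"
    and pos: "\<And>r. r \<ge> 0 \<Longrightarrow> u r > 0"
    and d1: "\<And>r. r \<ge> 0 \<Longrightarrow> (u has_real_derivative u' r) (at r within {0..})"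
    and d2: "\<And>r. r > 0 \<Longrightarrow> (u' has_real_derivative u'' r) (at r)"
    and ode: "\<And>r. r > 0 \<Longrightarrow> u'' r + (real n - 1) / r * u' r + nonlin \<omega> p q (u r) = 0"
    and init: "u' 0 = 0"
    and lim: "(u \<longlongrightarrow> 0) at_top"
begin

abbreviation "f \<equiv> nonlin \<omega> p q"
abbreviation "F \<equiv> Fc \<omega> p q"

lemma d1': "r > 0 \<Longrightarrow> (u has_real_derivative u' r) (at r)"
proof -
  assume r: "r > 0"
  have "(u has_real_derivative u' r) (at r within {0<..})"
    by (rule DERIV_subset[OF d1]) (use r in auto)
  then show ?thesis using at_within_open[of r "{0<..}"] r by simp
qed

lemma ucont: "continuous_on {0..} u"
  unfolding continuous_on_eq_continuous_within by (auto intro!: DERIV_continuous[OF d1])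

lemma u''_eq: "r > 0 \<Longrightarrow> u'' r = - ((real n - 1) / r * u' r) - f (u r)"
  using ode[of r] by linarith

lemma fu_cont: "continuous_on {0..} (\<lambda>s. f (u s))"
  by (rule continuous_on_compose2[OF nonlin_cont ucont]) (auto intro: pos)

lemma w_deriv: assumes r: "r > 0"
  shows "((\<lambda>s. s ^ (n - 1) * u' s) has_real_derivative - (r ^ (n - 1) * f (u r))) (at r)"
proof -
  have "((\<lambda>s. s ^ (n - 1) * u' s) has_real_derivative
      (real (n - 1) * r ^ (n - 1 - 1) * u' r + r ^ (n - 1) * u'' r)) (at r)"
    by (auto intro!: derivative_eq_intros d2 r)
  moreover have "real (n - 1) * r ^ (n - 1 - 1) * u' r + r ^ (n - 1) * u'' r
      = - (r ^ (n - 1) * f (u r))"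
    unfolding pow_deriv_aux[OF n r] u''_eq[OF r] using r by (simp add: field_simps)
  ultimately show ?thesis by simp
qed

lemma small_u'_near0: assumes "\<eta> > 0" "r > 0"
  shows "\<exists>e. 0 < e \<and> e < r \<and> \<bar>u' e\<bar> < \<eta>"
proof -
  have "((\<lambda>y. (u y - u 0) / (y - 0)) \<longlongrightarrow> 0) (at 0 within {0..})"
    using d1[of 0] init by (simp add: has_field_derivative_iff)
  then have "eventually (\<lambda>y. \<bar>(u y - u 0) / (y - 0)\<bar> < \<eta>) (at 0 within {0..})"
    using assms(1) by (auto dest!: tendstoD simp: dist_real_def)
  then obtain d where d: "d > 0" "\<And>y. y \<in> {0..} \<Longrightarrow> y \<noteq> 0 \<Longrightarrow> dist y 0 < d \<Longrightarrow> \<bar>(u y - u 0) / (y - 0)\<bar> < \<eta>"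
    unfolding eventually_at by auto
  define y where "y = min r d / 2"
  have y: "0 < y" "y < r" "y < d" unfolding y_def using d assms by auto
  have "\<exists>l z. 0 < z \<and> z < y \<and> (u has_real_derivative l) (at z) \<and> u y - u 0 = (y - 0) * l"
  proof (rule MVT[OF y(1)])
    show "continuous_on {0..y} u" using ucont by (rule continuous_on_subset) auto
    show "\<And>x. 0 < x \<Longrightarrow> x < y \<Longrightarrow> u differentiable (at x)"
      using d1' real_differentiable_def by blast
  qed
  then obtain l z where z: "0 < z" "z < y" "(u has_real_derivative l) (at z)" "u y - u 0 = (y - 0) * l"
    by blast
  have "l = u' z" using DERIV_unique[OF z(3) d1'[OF z(1)]] .
  moreover have "\<bar>(u y - u 0) / (y - 0)\<bar> < \<eta>" using d(2)[of y] y by (auto simp: dist_real_def)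
  ultimately have "\<bar>u' z\<bar> < \<eta>" using z y by simp
  then show ?thesis using z y by (intro exI[of _ z]) auto
qed

lemma u'_bound0: "\<exists>B>0. \<forall>r. 0 < r \<longrightarrow> r \<le> 1 \<longrightarrow> \<bar>u' r\<bar> \<le> B * r"
proof -
  obtain B where B: "B > 0" "\<And>s. s \<in> {0..1} \<Longrightarrow> \<bar>f (u s)\<bar> \<le> B"
    using cont_bound[of "{0..1}" "\<lambda>s. f (u s)"] fu_cont
    by (metis atLeastAtMost_iff atLeast_iff compact_Icc continuous_on_subset subsetI)
  have main: "\<bar>r ^ (n - 1) * u' r\<bar> \<le> B * r ^ n" if r: "0 < r" "r \<le> 1" for r
  proof (rule field_le_epsilon)
    fix \<eta> :: real assume \<eta>: "\<eta> > 0"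
    obtain e where e: "0 < e" "e < r" "\<bar>u' e\<bar> < \<eta>" using small_u'_near0[OF \<eta> r(1)] by auto
    obtain \<xi> where \<xi>: "e < \<xi>" "\<xi> < r"
      "r ^ (n - 1) * u' r - e ^ (n - 1) * u' e = (r - e) * (- (\<xi> ^ (n - 1) * f (u \<xi>)))"
      using MVT2[OF e(2), of "\<lambda>s. s ^ (n - 1) * u' s" "\<lambda>s. - (s ^ (n - 1) * f (u s))"]
        w_deriv e by force
    have "\<bar>\<xi> ^ (n - 1) * f (u \<xi>)\<bar> \<le> r ^ (n - 1) * B"
    proof -
      have "\<bar>\<xi> ^ (n - 1) * f (u \<xi>)\<bar> = \<xi> ^ (n - 1) * \<bar>f (u \<xi>)\<bar>" using \<xi> e by (simp add: abs_mult)
      also have "\<dots> \<le> r ^ (n - 1) * B"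
        using \<xi> e r B(2)[of \<xi>] by (intro mult_mono power_mono) auto
      finally show ?thesis .
    qed
    then have "\<bar>r ^ (n - 1) * u' r - e ^ (n - 1) * u' e\<bar> \<le> (r - e) * (r ^ (n - 1) * B)"
      using \<xi> e by (simp add: abs_mult mult_left_mono)
    also have "\<dots> \<le> r * (r ^ (n - 1) * B)" using e B r by (intro mult_right_mono) auto
    also have "\<dots> = B * r ^ n" using n by (cases n) auto
    finally have h1: "\<bar>r ^ (n - 1) * u' r - e ^ (n - 1) * u' e\<bar> \<le> B * r ^ n" .
    have "\<bar>e ^ (n - 1) * u' e\<bar> \<le> 1 * \<eta>"
      unfolding abs_mult using e r \<eta> by (intro mult_mono) (auto intro: power_le_one)
    then show "\<bar>r ^ (n - 1) * u' r\<bar> \<le> B * r ^ n + \<eta>" using h1 by linarith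
  qed
  show ?thesis
  proof (intro exI[of _ B] conjI allI impI)
    fix r :: real assume r: "0 < r" "r \<le> 1"
    have "r ^ (n - 1) * \<bar>u' r\<bar> \<le> r ^ (n - 1) * (B * r)"
      using main[OF r] r n by (cases n) (auto simp: abs_mult)
    then show "\<bar>u' r\<bar> \<le> B * r" using r by (simp add: mult_le_cancel_left)
  qed (use B in auto)
qed

end


lemma decr_to_neg:
  fixes W :: "real \<Rightarrow> real"
  assumes "\<delta> > 0" "B > 0" "\<And>x y. 0 < x \<Longrightarrow> x < y \<Longrightarrow> y < \<delta> \<Longrightarrow> W y < W x"
    "\<And>x. 0 < x \<Longrightarrow> x < \<delta> \<Longrightarrow> \<bar>W x\<bar> \<le> B * x"
    and y: "0 < y" "y < \<delta>"
  shows "W y < 0"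
proof -
  define m where "m = y / 2"
  have m: "0 < m" "m < y" using y unfolding m_def by auto
  have "W m \<le> 0"
  proof (rule ccontr)
    assume "\<not> W m \<le> 0"
    then have Wm: "W m > 0" by simp
    define x where "x = min (m/2) (W m / (2*B))"
    have x: "0 < x" "x < m" using m Wm assms(2) unfolding x_def by auto
    have "W x \<le> B * x" using assms(4)[of x] x m y by auto
    also have "\<dots> \<le> B * (W m / (2*B))" using assms(2) unfolding x_def
      by (intro mult_left_mono) auto
    also have "\<dots> = W m / 2" using assms(2) by simp
    finally have "W x < W m" using Wm by simp
    moreover have "W m < W x" using assms(3)[of x m] x m y by auto
    ultimately show False by simp
  qed
  moreover have "W y < W m" using assms(3)[of m y] m y by auto
  ultimately show ?thesis by simp
qed

context ode begin

definition EE :: "real \<Rightarrow> real" where "EE r = (u' r)^2 / 2 + F (u r)"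

lemma E_deriv: assumes r: "r > 0"
  shows "(EE has_real_derivative - ((real n - 1) / r * (u' r)^2)) (at r)"
proof -
  have h1: "((\<lambda>s. (u' s)^2) has_real_derivative real 2 * (u' r) ^ (2 - 1) * u'' r) (at r)"
    using DERIV_mult[OF d2[OF r] d2[OF r]] by (simp add: power2_eq_square algebra_simps)
  have h2: "((\<lambda>s. F (u s)) has_real_derivative f (u r) * u' r) (at r)"
    by (rule DERIV_chain2[OF Fc_deriv[OF pq1 pq2 om0 pos] d1'[OF r]]) (use r in auto)
  have "((\<lambda>s. (u' s)^2 / 2 + F (u s)) has_real_derivative
      (real 2 * (u' r) ^ (2 - 1) * u'' r / 2 + f (u r) * u' r)) (at r)"
    by (intro DERIV_add DERIV_cdivide h1 h2)
  moreover have "real 2 * (u' r) ^ (2 - 1) * u'' r / 2 + f (u r) * u' r = - ((real n - 1) / r * (u' r)^2)"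
    unfolding u''_eq[OF r] using r by (simp add: field_simps power2_eq_square)
  ultimately show ?thesis unfolding EE_def[abs_def] by simp
qed

lemma E_anti: assumes "0 < r" "r \<le> r'" shows "EE r' \<le> EE r"
proof -
  have "EE r' \<le> EE r"
  proof -
    have "(\<lambda>s. - EE s) r \<le> (\<lambda>s. - EE s) r'"
    proof (rule DERIV_nonneg_imp_nondecreasing[OF assms(2)])
      fix x assume x: "r \<le> x" "x \<le> r'"
      then have x0: "x > 0" using assms by auto
      have "0 \<le> (real n - 1) / x * (u' x)^2" using n x0 by simp
      then show "\<exists>y. ((\<lambda>s. - EE s) has_real_derivative y) (at x) \<and> 0 \<le> y"
        using DERIV_minus[OF E_deriv[OF x0]] by auto
    qed
    then show ?thesis by simp
  qed
  then show ?thesis .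
qed

lemma Fu_lim: "((\<lambda>s. F (u s)) \<longlongrightarrow> 0) at_top"
proof -
  have "((\<lambda>s. F (u s)) \<longlongrightarrow> F 0) at_top"
  proof (rule continuous_on_tendsto_compose[OF Fc_cont[OF pq1 pq2 om0] lim])
    show "\<forall>\<^sub>F x in at_top. u x \<in> {0..}"
      using eventually_ge_at_top[of 0] by eventually_elim (use pos in \<open>auto intro: less_imp_le\<close>)
  qed auto
  then show ?thesis using Fc0[OF pq1 pq2 om0] by simp
qed

lemma E_nonneg: assumes r: "r > 0" shows "EE r \<ge> 0"
proof (rule ccontr)
  assume "\<not> ?thesis"
  then have Er: "EE r < 0" by simp
  have "eventually (\<lambda>s. \<bar>F (u s) - 0\<bar> < - EE r) at_top"
    using Fu_lim Er by (auto dest!: tendstoD simp: dist_real_def)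
  moreover have "eventually (\<lambda>s. s \<ge> r) at_top" by (rule eventually_ge_at_top)
  ultimately have "eventually (\<lambda>s. \<bar>F (u s)\<bar> < - EE r \<and> s \<ge> r) at_top"
    by eventually_elim auto
  then obtain N where N: "\<And>s. s \<ge> N \<Longrightarrow> \<bar>F (u s)\<bar> < - EE r \<and> s \<ge> r"
    unfolding eventually_at_top_linorder by auto
  define s where "s = max N r"
  have s: "\<bar>F (u s)\<bar> < - EE r" "s \<ge> r" using N[of s] unfolding s_def by auto
  have "EE s \<le> EE r" using E_anti[OF r s(2)] .
  then have "(u' s)^2 / 2 < 0" unfolding EE_def using s(1) unfolding EE_def by linarith
  then show False by (simp add: not_less)
qed

lemma Fu0_nonneg: "F (u 0) \<ge> 0"
proof -
  obtain B where B: "B > 0" "\<And>r. 0 < r \<Longrightarrow> r \<le> 1 \<Longrightarrow> \<bar>u' r\<bar> \<le> B * r"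
    using u'_bound0 by auto
  have cF: "continuous_on {0..} (\<lambda>s. F (u s))"
    by (rule continuous_on_compose2[OF Fc_cont[OF pq1 pq2 om0] ucont]) (auto intro: less_imp_le pos)
  then have "((\<lambda>s. F (u s)) \<longlongrightarrow> F (u 0)) (at 0 within {0..})"
    unfolding continuous_on_def by auto
  then have l1: "((\<lambda>s. F (u s)) \<longlongrightarrow> F (u 0)) (at_right 0)"
    by (rule tendsto_within_subset) auto
  have "((\<lambda>s. F (u s) + (B * s)^2 / 2) \<longlongrightarrow> F (u 0) + (B * 0)^2 / 2) (at_right 0)"
    by (intro tendsto_intros l1) auto
  then have l2: "((\<lambda>s. F (u s) + (B * s)^2 / 2) \<longlongrightarrow> F (u 0)) (at_right 0)" by simp
  have ev: "eventually (\<lambda>s. 0 \<le> F (u s) + (B * s)^2 / 2) (at_right (0::real))"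
    unfolding eventually_at_right_field
  proof (intro exI[of _ 1] conjI allI impI)
    fix s :: real assume s: "0 < s" "s < 1"
    have "\<bar>u' s\<bar>^2 \<le> (B * s)^2" using B(2)[of s] s by (intro power_mono) auto
    then have "(u' s)^2 \<le> (B * s)^2" by simp
    moreover have "EE s \<ge> 0" using E_nonneg s by auto
    ultimately show "0 \<le> F (u s) + (B * s)^2 / 2" unfolding EE_def by linarith
  qed simp
  show ?thesis by (rule tendsto_lowerbound[OF l2 ev]) simp
qed

lemma u_dec: assumes "0 \<le> a" "a < b" "\<And>x. a < x \<Longrightarrow> x < b \<Longrightarrow> u' x < 0" shows "u b < u a"
proof (rule DERIV_neg_imp_decreasing_open[OF assms(2)])
  show "continuous_on {a..b} u" using ucont by (rule continuous_on_subset) (use assms in auto)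
  fix x assume "a < x" "x < b"
  then show "\<exists>y. (u has_real_derivative y) (at x) \<and> y < 0" using d1'[of x] assms by force
qed

lemma u_inc: assumes "0 \<le> a" "a < b" "\<And>x. a < x \<Longrightarrow> x < b \<Longrightarrow> u' x > 0" shows "u a < u b"
proof (rule DERIV_pos_imp_increasing_open[OF assms(2)])
  show "continuous_on {a..b} u" using ucont by (rule continuous_on_subset) (use assms in auto)
  fix x assume "a < x" "x < b"
  then show "\<exists>y. (u has_real_derivative y) (at x) \<and> y > 0" using d1'[of x] assms by force
qed

lemma sign_near0:
  assumes "\<sigma> = 1 \<or> \<sigma> = -1" "\<sigma> * f (u 0) > 0"
  shows "\<exists>\<delta>>0. \<forall>y. 0 < y \<longrightarrow> y < \<delta> \<longrightarrow> \<sigma> * u' y < 0"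
proof -
  obtain B where B: "B > 0" "\<And>r. 0 < r \<Longrightarrow> r \<le> 1 \<Longrightarrow> \<bar>u' r\<bar> \<le> B * r"
    using u'_bound0 by auto
  have "((\<lambda>s. \<sigma> * f (u s)) \<longlongrightarrow> \<sigma> * f (u 0)) (at 0 within {0..})"
    using fu_cont unfolding continuous_on_def by (auto intro: tendsto_intros)
  then have "eventually (\<lambda>s. \<sigma> * f (u s) > 0) (at 0 within {0..})"
    using assms(2) by (rule order_tendstoD)
  then obtain d where d: "d > 0" "\<And>s. s \<in> {0..} \<Longrightarrow> s \<noteq> 0 \<Longrightarrow> dist s 0 < d \<Longrightarrow> \<sigma> * f (u s) > 0"
    unfolding eventually_at by auto
  define \<delta> where "\<delta> = min d 1"
  have \<delta>: "\<delta> > 0" "\<delta> \<le> 1" "\<delta> \<le> d" using d unfolding \<delta>_def by auto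
  define W where "W s = \<sigma> * (s ^ (n - 1) * u' s)" for s
  have W: "W y < 0" if y: "0 < y" "y < \<delta>" for y
  proof (rule decr_to_neg[OF \<delta>(1) B(1) _ _ y])
    fix x y assume xy: "0 < x" "x < y" "y < \<delta>"
    show "W y < W x"
    proof (rule DERIV_neg_imp_decreasing_open[OF xy(2)])
      have der: "(W has_real_derivative \<sigma> * - (t ^ (n - 1) * f (u t))) (at t)" if "t > 0" for t
        unfolding W_def[abs_def] by (intro DERIV_cmult w_deriv that)
      show "continuous_on {x..y} W"
      proof (rule continuous_at_imp_continuous_on, rule ballI)
        fix t assume "t \<in> {x..y}"
        then have "t > 0" using xy by auto
        then show "isCont W t" by (rule DERIV_isCont[OF der])
      qed
      fix t assume t: "x < t" "t < y"
      have "\<sigma> * f (u t) > 0" using d(2)[of t] t xy \<delta> by (auto simp: dist_real_def)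
      moreover have "t ^ (n - 1) > 0" using t xy by simp
      ultimately have "0 < (\<sigma> * f (u t)) * t ^ (n - 1)" by (rule mult_pos_pos)
      moreover have "\<sigma> * - (t ^ (n - 1) * f (u t)) = - ((\<sigma> * f (u t)) * t ^ (n - 1))"
        by (simp add: algebra_simps)
      ultimately have "\<sigma> * - (t ^ (n - 1) * f (u t)) < 0" by linarith
      then show "\<exists>y. (W has_real_derivative y) (at t) \<and> y < 0" using der[of t] t xy by auto
    qed
  next
    fix x assume x: "0 < x" "x < \<delta>"
    have "\<bar>W x\<bar> = x ^ (n - 1) * \<bar>u' x\<bar>" unfolding W_def using assms(1) x by (auto simp: abs_mult)
    also have "\<dots> \<le> 1 * (B * x)" using B(2)[of x] x \<delta> by (intro mult_mono power_le_one) auto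
    finally show "\<bar>W x\<bar> \<le> B * x" by simp
  qed
  show ?thesis
  proof (intro exI[of _ \<delta>] conjI allI impI \<delta>(1))
    fix y assume y: "0 < y" "y < \<delta>"
    have "W y < 0" using W y .
    then have "y ^ (n - 1) * (\<sigma> * u' y) < 0" unfolding W_def by (simp add: algebra_simps)
    then show "\<sigma> * u' y < 0" using y by (simp add: mult_less_0_iff)
  qed
qed

end


context ode begin

lemma second_min: assumes rm: "rm > 0" and "d > 0" "\<And>s. rm \<le> s \<Longrightarrow> s \<le> rm + d \<Longrightarrow> u rm \<le> u s"
  and u0: "u' rm = 0"
  shows "u'' rm \<ge> 0"
proof (rule ccontr)
  assume "\<not> ?thesis" then have "u'' rm < 0" by simp
  from DERIV_neg_dec_right[OF d2[OF rm] this] obtain d' where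
    d': "d' > 0" "\<And>h. h > 0 \<Longrightarrow> h < d' \<Longrightarrow> u' (rm + h) < u' rm" by auto
  define h0 where "h0 = min d (d'/2)"
  have h0: "0 < h0" "h0 \<le> d" "h0 < d'" using assms d' unfolding h0_def by auto
  have "u (rm + h0) < u rm"
  proof (rule u_dec)
    fix x assume x: "rm < x" "x < rm + h0"
    have "u' (rm + (x - rm)) < u' rm" using d'(2)[of "x - rm"] x h0 by auto
    then show "u' x < 0" using u0 by simp
  qed (use rm h0 in auto)
  moreover have "u rm \<le> u (rm + h0)" using assms(3)[of "rm + h0"] h0 by auto
  ultimately show False by simp
qed

lemma second_max: assumes rm: "rm > 0" and "d > 0" "\<And>s. rm \<le> s \<Longrightarrow> s \<le> rm + d \<Longrightarrow> u s \<le> u rm"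
  and u0: "u' rm = 0"
  shows "u'' rm \<le> 0"
proof (rule ccontr)
  assume "\<not> ?thesis" then have "u'' rm > 0" by simp
  from DERIV_pos_inc_right[OF d2[OF rm] this] obtain d' where
    d': "d' > 0" "\<And>h. h > 0 \<Longrightarrow> h < d' \<Longrightarrow> u' rm < u' (rm + h)" by auto
  define h0 where "h0 = min d (d'/2)"
  have h0: "0 < h0" "h0 \<le> d" "h0 < d'" using assms d' unfolding h0_def by auto
  have "u rm < u (rm + h0)"
  proof (rule u_inc)
    fix x assume x: "rm < x" "x < rm + h0"
    have "u' rm < u' (rm + (x - rm))" using d'(2)[of "x - rm"] x h0 by auto
    then show "u' x > 0" using u0 by simp
  qed (use rm h0 in auto)
  moreover have "u (rm + h0) \<le> u rm" using assms(3)[of "rm + h0"] h0 by auto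
  ultimately show False by simp
qed

lemma f_kk_sign: assumes s: "s > 0"
  shows "(f s \<ge> 0 \<longleftrightarrow> kk \<omega> p q s \<ge> 0) \<and> (f s \<le> 0 \<longleftrightarrow> kk \<omega> p q s \<le> 0)"
proof -
  have e: "f s = s * kk \<omega> p q s" by (rule nonlin_eq[OF pq1 pq2 om0 s])
  have a: "0 \<le> s * k \<longleftrightarrow> 0 \<le> k" for k :: real
    using mult_le_cancel_left_pos[OF s, of 0 k] by simp
  have b: "s * k \<le> 0 \<longleftrightarrow> k \<le> 0" for k :: real
    using mult_le_cancel_left_pos[OF s, of k 0] by simp
  show ?thesis unfolding e a b by simp
qed

lemma u'_nonpos: assumes r1: "r1 > 0" shows "u' r1 \<le> 0"
proof (rule ccontr)
  assume "\<not> u' r1 \<le> 0" then have up: "u' r1 > 0" by simp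
  define c where "c = cc p q"
  have cu: "continuous_on {0..r1} u" using ucont by (rule continuous_on_subset) auto
  obtain rm where rm: "rm \<in> {0..r1}" "\<And>s. s \<in> {0..r1} \<Longrightarrow> u rm \<le> u s"
    using continuous_attains_inf[OF compact_Icc _ cu] r1 by force
  obtain dl where dl: "dl > 0" "\<And>h. h > 0 \<Longrightarrow> h < dl \<Longrightarrow> u (r1 - h) < u r1"
    using DERIV_pos_inc_left[OF d1'[OF r1] up] by auto
  define h1 where "h1 = min dl r1 / 2"
  have h1: "0 < h1" "h1 < dl" "h1 < r1" using dl r1 unfolding h1_def by auto
  have a_lt: "u rm < u r1" using rm(2)[of "r1 - h1"] dl(2)[of h1] h1 by auto
  have "eventually (\<lambda>s. u s < u r1) at_top" using lim pos[of r1] r1 by (intro order_tendstoD(2)) auto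
  then obtain R where R: "\<And>s. s \<ge> R \<Longrightarrow> u s < u r1" unfolding eventually_at_top_linorder by auto
  define R' where "R' = max R r1"
  have cu2: "continuous_on {r1..R'} u" using ucont by (rule continuous_on_subset) (use r1 in auto)
  obtain rM where rM: "rM \<in> {r1..R'}" "\<And>s. s \<in> {r1..R'} \<Longrightarrow> u s \<le> u rM"
    using continuous_attains_sup[OF compact_Icc _ cu2] unfolding R'_def by force
  have rMg: "u s \<le> u rM" if "s \<ge> r1" for s
  proof (cases "s \<le> R'")
    case True then show ?thesis using rM that by auto
  next
    case False then show ?thesis using R[of s] rM(2)[of r1] unfolding R'_def by force
  qed
  obtain dr where dr: "dr > 0" "\<And>h. h > 0 \<Longrightarrow> h < dr \<Longrightarrow> u r1 < u (r1 + h)"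
    using DERIV_pos_inc_right[OF d1'[OF r1] up] by auto
  have rM_gt: "rM > r1"
  proof (rule ccontr)
    assume "\<not> rM > r1" then have "rM = r1" using rM by auto
    have "u r1 < u (r1 + dr/2)" using dr(2)[of "dr/2"] dr(1) by simp
    moreover have "u (r1 + dr/2) \<le> u rM" using rMg[of "r1 + dr/2"] dr(1) by simp
    ultimately show False using \<open>rM = r1\<close> by simp
  qed
  have rM0: "rM > 0" using rM_gt r1 by simp
  have u'M: "u' rM = 0"
  proof (rule DERIV_local_max[OF d1'[OF rM0], of "rM - r1"])
    show "0 < rM - r1" using rM_gt by simp
    show "\<forall>y. \<bar>rM - y\<bar> < rM - r1 \<longrightarrow> u y \<le> u rM" using rMg by auto
  qed
  have "u'' rM \<le> 0" by (rule second_max[OF rM0 _ _ u'M, of 1]) (use rMg rM_gt in auto)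
  then have "f (u rM) \<ge> 0" using ode[OF rM0] u'M by simp
  then have kb: "kk \<omega> p q (u rM) \<ge> 0" using f_kk_sign[OF pos[of rM]] rM0 by simp
  define a where "a = u rm"
  define b where "b = u rM"
  have ab: "a < b" unfolding a_def b_def using a_lt rMg[of r1] by simp
  have a0: "a > 0" unfolding a_def using pos rm by auto
  have ka: "kk \<omega> p q a \<le> 0 \<and> F a \<ge> 0"
  proof (cases "rm = 0")
    case True
    have "kk \<omega> p q a \<le> 0"
    proof (rule ccontr)
      assume "\<not> ?thesis"
      then have "f (u 0) > 0" using f_kk_sign[OF pos[of 0]] True unfolding a_def by auto
      then obtain \<delta> where \<delta>: "\<delta> > 0" "\<And>y. 0 < y \<Longrightarrow> y < \<delta> \<Longrightarrow> 1 * u' y < 0"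
        using sign_near0[of 1] by auto
      define y0 where "y0 = min \<delta> r1 / 2"
      have y0: "0 < y0" "y0 < \<delta>" "y0 \<le> r1" using \<delta> r1 unfolding y0_def by auto
      have "u y0 < u 0" by (rule u_dec) (use y0 \<delta> in auto)
      then show False using rm(2)[of y0] y0 True by auto
    qed
    then show ?thesis using Fu0_nonneg True unfolding a_def by simp
  next
    case False
    have rm0: "rm > 0" "rm < r1" using False rm a_lt by (auto simp: order.order_iff_strict)
    have u'm: "u' rm = 0"
    proof (rule DERIV_local_min[OF d1'[OF rm0(1)], of "min rm (r1 - rm)"])
      show "0 < min rm (r1 - rm)" using rm0 by simp
      show "\<forall>y. \<bar>rm - y\<bar> < min rm (r1 - rm) \<longrightarrow> u rm \<le> u y"
      proof (intro allI impI)
        fix y assume "\<bar>rm - y\<bar> < min rm (r1 - rm)"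
        then have "0 \<le> y" "y \<le> r1" by (auto simp: abs_less_iff)
        then show "u rm \<le> u y" using rm(2) by auto
      qed
    qed
    have "u'' rm \<ge> 0" by (rule second_min[OF rm0(1) _ _ u'm, of "r1 - rm"]) (use rm rm0 in auto)
    then have "f (u rm) \<le> 0" using ode[OF rm0(1)] u'm by simp
    then have "kk \<omega> p q a \<le> 0" using f_kk_sign[OF pos[of rm]] rm0 unfolding a_def by simp
    moreover have "F a \<ge> 0" using E_nonneg[OF rm0(1)] u'm unfolding EE_def a_def by simp
    ultimately show ?thesis by simp
  qed
  show False
  proof (cases "a \<le> c")
    case True
    have "F a < F 0"
    proof (rule Fc_santi[OF pq1 pq2 om0])
      fix t assume t: "0 < t" "t < a"
      have "kk \<omega> p q t < kk \<omega> p q a" using kk_inc[OF pq1 pq2 om0 t(1) t(2)] True unfolding c_def by simp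
      then show "kk \<omega> p q t < 0" using ka by simp
    qed (use a0 in auto)
    then show False using ka Fc0[OF pq1 pq2 om0] by simp
  next
    case False
    have "kk \<omega> p q b < kk \<omega> p q a" using kk_dec[OF pq1 pq2 om0, of a b] False ab unfolding c_def by simp
    then show False using ka kb unfolding b_def by simp
  qed
qed

lemma u_anti: assumes "0 \<le> x" "x \<le> y" shows "u y \<le> u x"
proof -
  have "(\<lambda>s. - u s) x \<le> (\<lambda>s. - u s) y"
  proof (rule DERIV_nonneg_imp_increasing_open[OF assms(2)])
    show "continuous_on {x..y} (\<lambda>s. - u s)"
      using ucont by (intro continuous_intros) (rule continuous_on_subset, use assms in auto)
    fix t assume t: "x < t" "t < y"
    then have t0: "t > 0" using assms by simp
    show "\<exists>d. ((\<lambda>s. - u s) has_real_derivative d) (at t) \<and> 0 \<le> d"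
      using DERIV_minus[OF d1'[OF t0]] u'_nonpos[OF t0] by auto
  qed
  then show ?thesis by simp
qed

lemma kk_u0: "kk \<omega> p q (u 0) \<ge> 0"
proof (rule ccontr)
  assume "\<not> ?thesis"
  then have "(-1) * f (u 0) > 0" using f_kk_sign[OF pos[of 0]] by auto
  then obtain \<delta> where \<delta>: "\<delta> > 0" "\<And>y. 0 < y \<Longrightarrow> y < \<delta> \<Longrightarrow> (-1) * u' y < 0"
    using sign_near0[of "-1"] by auto
  then have "u' (\<delta>/2) > 0" by force
  then show False using u'_nonpos[of "\<delta>/2"] \<delta> by simp
qed

end


lemma exp_decay: assumes c: "(c::real) > 0" shows "((\<lambda>r. r^n * exp (-(c*r))) \<longlongrightarrow> 0) at_top"
proof -
  have lin: "filterlim (\<lambda>r. c * r) at_top at_top"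
    by (rule filterlim_tendsto_pos_mult_at_top[OF tendsto_const c filterlim_ident])
  have "((\<lambda>r. (c*r)^n / exp (c*r)) \<longlongrightarrow> 0) at_top"
    using filterlim_compose[OF tendsto_power_div_exp_0 lin] .
  then have "((\<lambda>r. (1/c^n) * ((c*r)^n / exp (c*r))) \<longlongrightarrow> (1/c^n) * 0) at_top"
    by (intro tendsto_intros)
  moreover have "(\<lambda>r. r^n * exp (-(c*r))) = (\<lambda>r. (1/c^n) * ((c*r)^n / exp (c*r)))"
    using c by (intro ext) (simp add: power_mult_distrib exp_minus field_simps)
  ultimately show ?thesis by simp
qed

lemma tri_bound: fixes a b c d e g1 g2 :: real assumes "a \<ge> 0" "b \<ge> 0" "e \<ge> 0"
  shows "\<bar>a * (b + 2*c) + d * e * g1 * g2\<bar> \<le> a * (b + 2*\<bar>c\<bar>) + \<bar>d\<bar> * e * \<bar>g1 * g2\<bar>"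
proof -
  have "\<bar>b + 2*c\<bar> \<le> b + 2*\<bar>c\<bar>" using assms by (cases "c \<ge> 0") (auto simp: abs_if)
  then have h1: "\<bar>a * (b + 2*c)\<bar> \<le> a * (b + 2*\<bar>c\<bar>)" using assms by (simp add: abs_mult mult_left_mono)
  have h2: "\<bar>d * e * g1 * g2\<bar> = \<bar>d\<bar> * e * \<bar>g1 * g2\<bar>" using assms by (simp add: abs_mult)
  show ?thesis using abs_triangle_ineq[of "a * (b + 2*c)" "d * e * g1 * g2"] h1 h2 by linarith
qed

context ode begin

definition Pc :: "real \<Rightarrow> real" where
  "Pc r = r ^ n * ((u' r)\<^sup>2 + 2 * F (u r)) + (real n - 2) * r ^ (n - 1) * u r * u' r"

lemma Pc_deriv: assumes r: "r > 0"
  shows "(Pc has_real_derivative r^(n-1) * (2 * real n * F (u r) - (real n - 2) * u r * f (u r))) (at r)"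
proof -
  have h2: "((\<lambda>s. F (u s)) has_real_derivative f (u r) * u' r) (at r)"
    by (rule DERIV_chain2[OF Fc_deriv[OF pq1 pq2 om0 pos] d1'[OF r]]) (use r in auto)
  have der: "(Pc has_real_derivative (real n * r^(n-1) * ((u' r)^2 + 2*F(u r)) + r^n * (2*u' r*u'' r + 2*(f(u r)*u' r))
      + (real n - 2) * ((real (n-1) * r^(n-1-1) * u r + r^(n-1) * u' r) * u' r + r^(n-1) * u r * u'' r))) (at r)"
    unfolding Pc_def[abs_def]
    by (auto intro!: derivative_eq_intros d2[OF r] d1'[OF r] h2 simp: algebra_simps power2_eq_square)
  have rn: "r ^ n = r * r ^ (n - 1)" using n by (cases n) auto
  have "real n * r^(n-1) * ((u' r)^2 + 2*F(u r)) + r^n * (2*u' r*u'' r + 2*(f(u r)*u' r))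
      + (real n - 2) * ((real (n-1) * r^(n-1-1) * u r + r^(n-1) * u' r) * u' r + r^(n-1) * u r * u'' r)
      = r^(n-1) * (2 * real n * F (u r) - (real n - 2) * u r * f (u r))"
    unfolding pow_deriv_aux[OF n r] u''_eq[OF r] rn using r
    by (simp add: field_simps power2_eq_square)
  then show ?thesis using der by simp
qed

lemma Pc_decay: "(Pc \<longlongrightarrow> 0) at_top"
proof -
  obtain \<sigma> where \<sigma>: "\<sigma> > 0" "\<And>s. 0 < s \<Longrightarrow> s \<le> \<sigma> \<Longrightarrow> kk \<omega> p q s \<le> - \<omega> / 2"
    using kk_small[OF pq1 pq2 om0] by auto
  have "eventually (\<lambda>s. u s < min \<sigma> 1) at_top" using lim \<sigma> by (intro order_tendstoD(2)) auto
  then obtain R0 where R0: "\<And>s. s \<ge> R0 \<Longrightarrow> u s < min \<sigma> 1" unfolding eventually_at_top_linorder by auto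
  define R1 where "R1 = max R0 1"
  have R1: "R1 \<ge> 1" "\<And>s. s \<ge> R1 \<Longrightarrow> u s < \<sigma> \<and> u s < 1" using R0 unfolding R1_def by auto
  define c where "c = sqrt (\<omega> / 2)"
  have c: "c > 0" "c * c = \<omega> / 2" unfolding c_def using om0 by auto
  have u''ge: "u'' r \<ge> c * c * u r" if r: "r \<ge> R1" for r
  proof -
    have r0: "r > 0" using r R1 by simp
    have "kk \<omega> p q (u r) \<le> - \<omega>/2" using \<sigma>(2)[of "u r"] R1(2)[OF r] pos[of r] r0 by auto
    then have "u r * kk \<omega> p q (u r) \<le> u r * (- (\<omega>/2))"
      using pos[of r] r0 by (intro mult_left_mono) auto
    then have "f (u r) \<le> - (\<omega>/2) * u r"
      using nonlin_eq[OF pq1 pq2 om0 pos[of r]] pos[of r] r0 by (simp add: ac_simps)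
    moreover have "(real n - 1) / r * u' r \<le> 0"
      using u'_nonpos[OF r0] n r0 by (intro mult_nonneg_nonpos) auto
    moreover have "c * c * u r = \<omega> * u r / 2" using c by simp
    ultimately show ?thesis using u''_eq[OF r0] by linarith
  qed
  have u''pos: "u'' r \<ge> 0" if "r \<ge> R1" for r
  proof -
    have "0 \<le> c * c * u r" using pos[of r] that R1 c by (intro mult_nonneg_nonneg) auto
    then show ?thesis using u''ge[OF that] by linarith
  qed
  have vneg: "u' r + c * u r \<le> 0" if r: "r \<ge> R1" for r
  proof (rule ccontr)
    assume "\<not> ?thesis"
    then have v0: "u' r + c * u r > 0" by simp
    have grow: "u' s + c * u s \<ge> u' r + c * u r" if s: "s \<ge> r" for s
    proof -
      have "(\<lambda>t. exp (-(c*t)) * (u' t + c * u t)) r \<le> (\<lambda>t. exp (-(c*t)) * (u' t + c * u t)) s"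
      proof (rule DERIV_nonneg_imp_nondecreasing[OF s])
        fix t assume t: "r \<le> t" "t \<le> s"
        then have t0: "t > 0" "t \<ge> R1" using r R1 by auto
        have "((\<lambda>t. exp (-(c*t)) * (u' t + c * u t)) has_real_derivative
            (exp (-(c*t)) * (-c) * (u' t + c * u t) + exp (-(c*t)) * (u'' t + c * u' t))) (at t)"
          by (auto intro!: derivative_eq_intros d2[OF t0(1)] d1'[OF t0(1)] simp: algebra_simps)
        moreover have "exp (-(c*t)) * (-c) * (u' t + c * u t) + exp (-(c*t)) * (u'' t + c * u' t)
            = exp (-(c*t)) * (u'' t - c * c * u t)" by (simp add: algebra_simps)
        moreover have "exp (-(c*t)) * (u'' t - c * c * u t) \<ge> 0" using u''ge[OF t0(2)] by simp
        ultimately show "\<exists>y. ((\<lambda>t. exp (-(c*t)) * (u' t + c * u t)) has_real_derivative y) (at t) \<and> 0 \<le> y"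
          by auto
      qed
      then have "exp (-(c*r)) * (u' r + c * u r) \<le> exp (-(c* s)) * (u' s + c * u s)" by simp
      then have "exp (c* s) * (exp (-(c*r)) * (u' r + c * u r)) \<le> exp (c* s) * (exp (-(c* s)) * (u' s + c * u s))"
        by (intro mult_left_mono) auto
      moreover have "exp (c*(s - r)) = exp (c * s) * exp (-(c*r))"
        by (simp add: exp_add[symmetric] algebra_simps)
      moreover have "exp (c * s) * exp (-(c * s)) = 1"
        by (simp add: exp_add[symmetric])
      ultimately have "exp (c*(s - r)) * (u' r + c * u r) \<le> u' s + c * u s"
        by (simp add: mult.assoc[symmetric])
      moreover have "exp (c*(s - r)) \<ge> 1" using c s by simp
      moreover have "u' r + c * u r \<le> exp (c*(s - r)) * (u' r + c * u r)"
        using mult_right_mono[OF \<open>exp (c*(s - r)) \<ge> 1\<close>, of "u' r + c * u r"] v0 by simp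
      ultimately show ?thesis by (meson order_trans)
    qed
    have "eventually (\<lambda>s. c * u s < u' r + c * u r) at_top"
      using tendsto_mult[OF tendsto_const lim, of c] v0 by (intro order_tendstoD(2)) auto
    then obtain S where S: "\<And>s. s \<ge> S \<Longrightarrow> c * u s < u' r + c * u r" unfolding eventually_at_top_linorder by auto
    define s where "s = max S r"
    have "u' s + c * u s \<ge> u' r + c * u r" using grow[of s] unfolding s_def by simp
    moreover have "c * u s < u' r + c * u r" using S[of s] unfolding s_def by simp
    moreover have "u' s \<le> 0" using u'_nonpos[of s] r R1 unfolding s_def by simp
    ultimately show False by simp
  qed
  define A where "A = u R1 * exp (c * R1)"
  have udec: "u r \<le> A * exp (-(c*r))" if r: "r \<ge> R1" for r
  proof -
    have "(\<lambda>t. exp (c*t) * u t) r \<le> (\<lambda>t. exp (c*t) * u t) R1"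
    proof (rule DERIV_nonpos_imp_nonincreasing[OF r])
      fix t assume t: "R1 \<le> t" "t \<le> r"
      then have t0: "t > 0" "t \<ge> R1" using R1 by auto
      have "((\<lambda>t. exp (c*t) * u t) has_real_derivative (exp (c*t) * c * u t + exp (c*t) * u' t)) (at t)"
        by (auto intro!: derivative_eq_intros d1'[OF t0(1)] simp: algebra_simps)
      moreover have "exp (c*t) * c * u t + exp (c*t) * u' t = exp (c*t) * (u' t + c * u t)"
        by (simp add: algebra_simps)
      moreover have "exp (c*t) * (u' t + c * u t) \<le> 0" using vneg[OF t0(2)] by (simp add: mult_nonneg_nonpos)
      ultimately show "\<exists>y. ((\<lambda>t. exp (c*t) * u t) has_real_derivative y) (at t) \<and> y \<le> 0" by auto
    qed
    then have "exp (c*r) * u r \<le> exp (c*R1) * u R1" by simp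
    then have "exp (-(c*r)) * (exp (c*r) * u r) \<le> exp (-(c*r)) * (exp (c*R1) * u R1)"
      by (intro mult_left_mono) auto
    then show ?thesis unfolding A_def by (simp add: exp_minus field_simps)
  qed
  have A0: "A > 0" unfolding A_def using pos[of R1] R1 by simp
  have u'mono: "u' s \<le> u' t" if "R1 \<le> s" "s \<le> t" for s t
  proof (rule DERIV_nonneg_imp_nondecreasing[OF that(2)])
    fix x assume x: "s \<le> x" "x \<le> t"
    then have "x > 0" "x \<ge> R1" using that R1 by auto
    then show "\<exists>y. (u' has_real_derivative y) (at x) \<and> 0 \<le> y" using d2 u''pos by blast
  qed
  have u'dec: "\<bar>u' r\<bar> \<le> A * exp c * exp (-(c*r))" if r: "r \<ge> R1 + 1" for r
  proof -
    obtain \<xi> where \<xi>: "r - 1 < \<xi>" "\<xi> < r" "u r - u (r - 1) = (r - (r - 1)) * u' \<xi>"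
      using MVT2[of "r - 1" r u u'] d1' r R1 by force
    have "u' \<xi> \<le> u' r" using u'mono[of \<xi> r] \<xi> r by simp
    then have "- u' r \<le> u (r - 1) - u r" using \<xi> by simp
    also have "\<dots> \<le> u (r - 1)" using pos[of r] r R1 by simp
    also have "\<dots> \<le> A * exp (-(c*(r - 1)))" using udec[of "r - 1"] r by simp
    also have "\<dots> = A * exp c * exp (-(c*r))" by (simp add: algebra_simps exp_add[symmetric])
    finally show ?thesis using u'_nonpos[of r] r R1 by simp
  qed
  define K where "K = \<omega>/2 + 2"
  have Fb: "\<bar>F s\<bar> \<le> K * s^2" if s: "0 < s" "s \<le> 1" for s
  proof -
    have a: "s powr (p+1) \<le> s powr 2" using s pq1 by (intro powr_mono') auto
    have b: "s powr (q+1) \<le> s powr 2" using s pq1 pq2 by (intro powr_mono') auto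
    have s2: "s powr 2 = s^2" using s by (simp add: powr_realpow[of s 2, simplified])
    have "s powr (p+1) / (p+1) \<le> s powr (p+1) / 1" by (rule divide_left_mono) (use pq1 in auto)
    then have a': "s powr (p+1) / (p+1) \<le> s^2" using a s2 by simp
    have "s powr (q+1) / (q+1) \<le> s powr (q+1) / 1" by (rule divide_left_mono) (use pq1 pq2 in auto)
    then have b': "s powr (q+1) / (q+1) \<le> s^2" using b s2 by simp
    have "0 \<le> s powr (p+1) / (p+1)" "0 \<le> s powr (q+1) / (q+1)" using pq1 pq2 by auto
    moreover have "0 \<le> \<omega> * s^2" using om0 by simp
    moreover have "F s = - (\<omega> * s^2 / 2) + s powr (p+1) / (p+1) - s powr (q+1) / (q+1)"
      unfolding Fc_def by simp
    moreover have "K * s^2 = \<omega> * s^2 / 2 + 2 * s^2" unfolding K_def by (simp add: algebra_simps)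
    ultimately show ?thesis using a' b' unfolding abs_le_iff by linarith
  qed
  define M where "M = (A * exp c)^2 + 2 * K * A^2 + \<bar>real n - 2\<bar> * A * (A * exp c)"
  have Pb: "\<bar>Pc r\<bar> \<le> M * (r^n * exp (-(2*c)*r))" if r: "r \<ge> R1 + 1" for r
  proof -
    have r1: "r \<ge> 1" "r > 0" using r R1 by auto
    define e where "e = exp (-(c*r))"
    have e: "e > 0" "e * e = exp (-(2*c)*r)" unfolding e_def by (auto simp: exp_add[symmetric])
    have ub: "0 < u r" "u r \<le> A * e" using pos[of r] udec[of r] r R1 unfolding e_def by auto
    have u'b: "\<bar>u' r\<bar> \<le> A * exp c * e" using u'dec[OF r] unfolding e_def .
    have u1: "u r \<le> 1" using R1(2)[of r] r by simp
    have "\<bar>u' r\<bar>^2 \<le> (A * exp c * e)^2" using u'b by (intro power_mono) auto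
    then have t1: "(u' r)^2 \<le> (A * exp c * e)^2" by simp
    have t2: "\<bar>F (u r)\<bar> \<le> K * (A * e)^2"
    proof -
      have "\<bar>F (u r)\<bar> \<le> K * (u r)^2" using Fb ub u1 by simp
      also have "\<dots> \<le> K * (A * e)^2" unfolding K_def using ub om0
        by (intro mult_left_mono power_mono) auto
      finally show ?thesis .
    qed
    have t3: "\<bar>u r * u' r\<bar> \<le> (A * e) * (A * exp c * e)"
      unfolding abs_mult using ub u'b by (intro mult_mono) auto
    have rn: "r^(n-1) \<le> r^n" using r1 n by (intro power_increasing) auto
    have "\<bar>Pc r\<bar> \<le> r^n * ((u' r)^2 + 2 * \<bar>F (u r)\<bar>) + \<bar>real n - 2\<bar> * r^(n-1) * \<bar>u r * u' r\<bar>"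
      unfolding Pc_def using r1 by (intro tri_bound) auto
    also have "\<dots> \<le> r^n * ((A * exp c * e)^2 + 2 * (K * (A * e)^2)) + \<bar>real n - 2\<bar> * r^n * ((A * e) * (A * exp c * e))"
      using t1 t2 t3 rn r1
      by (intro add_mono mult_left_mono mult_mono) auto
    also have "\<dots> = M * (r^n * (e * e))" unfolding M_def by (simp add: algebra_simps power2_eq_square)
    finally show ?thesis using e by simp
  qed
  have "((\<lambda>r. M * (r^n * exp (-(2*c)*r))) \<longlongrightarrow> M * 0) at_top"
    using exp_decay[of "2*c" n] c by (intro tendsto_intros) (simp add: algebra_simps)
  then have L: "((\<lambda>r. M * (r^n * exp (-(2*c)*r))) \<longlongrightarrow> 0) at_top" by simp
  have Ev: "eventually (\<lambda>r. norm (Pc r) \<le> M * (r^n * exp (-(2*c)*r))) at_top"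
    using eventually_ge_at_top[of "R1 + 1"] by eventually_elim (use Pb in auto)
  show ?thesis by (rule Lim_null_comparison[OF Ev L])
qed

end


context ode begin

lemma Pc_deriv_gg: assumes r: "r > 0"
  shows "(Pc has_real_derivative r^(n-1) * ((u r)^2 * gg n \<omega> p q (u r))) (at r)"
  using Pc_deriv[OF r] GG_eq[OF pq1 pq2 om0 pos[of r], of n] r by simp

lemma Pc_cont: assumes "a > 0" shows "continuous_on {a..b} Pc"
proof (rule continuous_at_imp_continuous_on, rule ballI)
  fix x assume "x \<in> {a..b}"
  then have "x > 0" using assms by auto
  then show "isCont Pc x" by (rule DERIV_isCont[OF Pc_deriv_gg])
qed

lemma Pc_near0: "\<exists>K>0. \<forall>x. 0 < x \<longrightarrow> x \<le> 1 \<longrightarrow> \<bar>Pc x\<bar> \<le> K * x"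
proof -
  obtain B where B: "B > 0" "\<And>r. 0 < r \<Longrightarrow> r \<le> 1 \<Longrightarrow> \<bar>u' r\<bar> \<le> B * r"
    using u'_bound0 by auto
  have cF0: "continuous_on {0..} (\<lambda>s. F (u s))"
    by (rule continuous_on_compose2[OF Fc_cont[OF pq1 pq2 om0] ucont]) (auto intro: less_imp_le pos)
  have cF: "continuous_on {0..1} (\<lambda>s. F (u s))"
    using cF0 by (rule continuous_on_subset) auto
  obtain KF where KF: "KF > 0" "\<And>s. s \<in> {0..1} \<Longrightarrow> \<bar>F (u s)\<bar> \<le> KF"
    using cont_bound[OF compact_Icc cF] by auto
  define K where "K = B^2 + 2 * KF + \<bar>real n - 2\<bar> * u 0 * B + 1"
  have K0: "K > 0" unfolding K_def using KF pos[of 0] B by (simp add: add_pos_nonneg)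
  show ?thesis
  proof (intro exI[of _ K] conjI allI impI K0)
    fix x :: real assume x: "0 < x" "x \<le> 1"
    have u'x: "\<bar>u' x\<bar> \<le> B * x" using B(2) x by simp
    have "B * x \<le> B" using x B by (intro mult_left_le) auto
    then have u'x1: "\<bar>u' x\<bar> \<le> B" using u'x by linarith
    have sq: "(u' x)^2 \<le> B^2"
    proof -
      have "\<bar>u' x\<bar>^2 \<le> B^2" using u'x1 by (intro power_mono) auto
      then show ?thesis by simp
    qed
    have ux: "0 < u x" "u x \<le> u 0" using pos[of x] u_anti[of 0 x] x by auto
    have Fx: "\<bar>F (u x)\<bar> \<le> KF" using KF(2)[of x] x by simp
    have xn: "x^n \<le> x" using x n power_decreasing[of 1 n x] by simp
    have xn1: "x^(n-1) * x = x^n" using n by (cases n) auto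
    have t3: "\<bar>u x * u' x\<bar> \<le> u 0 * (B * x)" unfolding abs_mult using ux u'x by (intro mult_mono) auto
    have "\<bar>Pc x\<bar> \<le> x^n * ((u' x)^2 + 2 * \<bar>F (u x)\<bar>) + \<bar>real n - 2\<bar> * x^(n-1) * \<bar>u x * u' x\<bar>"
      unfolding Pc_def using x by (intro tri_bound) auto
    also have "\<dots> \<le> x^n * (B^2 + 2 * KF) + \<bar>real n - 2\<bar> * x^(n-1) * (u 0 * (B * x))"
      using sq Fx t3 x by (intro add_mono mult_left_mono) auto
    also have "\<dots> = x^n * (B^2 + 2 * KF + \<bar>real n - 2\<bar> * u 0 * B)"
      using xn1 by (simp add: algebra_simps)
    also have "\<dots> \<le> x * (B^2 + 2 * KF + \<bar>real n - 2\<bar> * u 0 * B)"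
      using xn KF B pos[of 0] by (intro mult_right_mono) auto
    also have "\<dots> \<le> K * x" unfolding K_def using x by (simp add: algebra_simps)
    finally show "\<bar>Pc x\<bar> \<le> K * x" .
  qed
qed

lemma P_pos: assumes r: "r > 0" shows "Pc r > 0"
proof -
  obtain \<beta> where \<beta>: "cc p q < \<beta>" "kk \<omega> p q \<beta> = 0" "F \<beta> > 0"
    using beta_ex[OF pq1 pq2 om0 omb] by auto
  have \<beta>0: "\<beta> > 0" using \<beta>(1) cc_pos[OF pq1 pq2 om0] by simp
  have u0\<beta>: "u 0 \<le> \<beta>"
  proof (rule ccontr)
    assume "\<not> ?thesis"
    then have "kk \<omega> p q (u 0) < kk \<omega> p q \<beta>" using kk_dec[OF pq1 pq2 om0, of \<beta> "u 0"] \<beta> by simp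
    then show False using kk_u0 \<beta> by simp
  qed
  have gg\<beta>: "gg n \<omega> p q \<beta> > 0"
  proof -
    have "f \<beta> = 0" using nonlin_eq[OF pq1 pq2 om0 \<beta>0] \<beta> by simp
    then have "\<beta>^2 * gg n \<omega> p q \<beta> = 2 * real n * F \<beta>" using GG_eq[OF pq1 pq2 om0 \<beta>0, of n] by simp
    also have "\<dots> > 0" using \<beta> n by simp
    finally show ?thesis using \<beta>0 by (simp add: zero_less_mult_iff)
  qed
  have trap: "gg n \<omega> p q (u y) \<le> 0" if "0 < x" "x \<le> y" "gg n \<omega> p q (u x) \<le> 0" for x y
    using gg_trap[OF pq1 pq2 om0, of "u y" "u x" \<beta> n] that pos[of y] u_anti[of x y] u_anti[of 0 x] u0\<beta> gg\<beta>
    by auto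
  obtain \<sigma> where \<sigma>: "\<sigma> > 0" "\<And>s. 0 < s \<Longrightarrow> s \<le> \<sigma> \<Longrightarrow> gg n \<omega> p q s < 0"
    using gg_small[OF pq1 pq2 om0, of n] by auto
  have "eventually (\<lambda>s. u s < \<sigma>) at_top" using lim \<sigma> by (intro order_tendstoD(2)) auto
  then obtain R0 where R0: "\<And>s. s \<ge> R0 \<Longrightarrow> u s < \<sigma>" unfolding eventually_at_top_linorder by auto
  have Z: "gg n \<omega> p q (u s) < 0" if "s \<ge> R0" "s \<ge> 0" for s
    using \<sigma>(2)[of "u s"] R0[OF that(1)] pos[OF that(2)] by simp
  show ?thesis
  proof (cases "\<forall>x. 0 < x \<longrightarrow> x \<le> r \<longrightarrow> gg n \<omega> p q (u x) > 0")
    case True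
    have inc: "Pc x < Pc y" if "0 < x" "x < y" "y \<le> r" for x y
    proof (rule DERIV_pos_imp_increasing_open[OF that(2)])
      show "continuous_on {x..y} Pc" using Pc_cont that by simp
      fix t assume t: "x < t" "t < y"
      then have t0: "t > 0" using that by simp
      have "t^(n-1) * ((u t)^2 * gg n \<omega> p q (u t)) > 0"
        using True t that pos[of t] t0 by simp
      then show "\<exists>y. (Pc has_real_derivative y) (at t) \<and> 0 < y" using Pc_deriv_gg[OF t0] by auto
    qed
    obtain K where K: "K > 0" "\<And>x. 0 < x \<Longrightarrow> x \<le> 1 \<Longrightarrow> \<bar>Pc x\<bar> \<le> K * x" using Pc_near0 by auto
    define \<delta> where "\<delta> = min r 1"
    have \<delta>: "\<delta> > 0" "\<delta> \<le> r" "\<delta> \<le> 1" unfolding \<delta>_def using r by auto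
    have "(\<lambda>x. - Pc x) (\<delta>/2) < 0"
    proof (rule decr_to_neg[where W = "\<lambda>x. - Pc x" and y = "\<delta>/2", OF \<delta>(1) K(1)])
      fix x y assume "0 < x" "x < y" "y < \<delta>"
      then show "- Pc y < - Pc x" using inc[of x y] \<delta> by simp
    next
      fix x assume "0 < x" "x < \<delta>"
      then show "\<bar>- Pc x\<bar> \<le> K * x" using K(2)[of x] \<delta> by simp
    qed (use \<delta> in auto)
    then have "Pc (\<delta>/2) > 0" by simp
    moreover have "Pc (\<delta>/2) < Pc r" using inc[of "\<delta>/2" r] \<delta> by simp
    ultimately show ?thesis by simp
  next
    case False
    then obtain x where x: "0 < x" "x \<le> r" "gg n \<omega> p q (u x) \<le> 0" by auto
    have neg: "gg n \<omega> p q (u y) \<le> 0" if "y \<ge> r" for y using trap[of x y] x that by simp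
    have nonincr: "Pc b \<le> Pc a" if "r \<le> a" "a \<le> b" for a b
    proof (rule DERIV_nonpos_imp_nonincreasing[OF that(2)])
      fix t assume t: "a \<le> t" "t \<le> b"
      then have t0: "t > 0" "t \<ge> r" using that r by auto
      have "t^(n-1) * ((u t)^2 * gg n \<omega> p q (u t)) \<le> 0"
        using neg[OF t0(2)] t0 by (intro mult_nonneg_nonpos) (auto intro: mult_nonneg_nonpos)
      then show "\<exists>y. (Pc has_real_derivative y) (at t) \<and> y \<le> 0" using Pc_deriv_gg[OF t0(1)] by auto
    qed
    define R where "R = max r R0"
    have R: "R \<ge> r" "R \<ge> R0" "R > 0" unfolding R_def using r by auto
    have s1: "Pc R \<le> Pc r" using nonincr[of r R] R by simp
    have s2: "Pc (R + 1) < Pc R"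
    proof (rule DERIV_neg_imp_decreasing_open[of R "R+1" Pc])
      show "continuous_on {R..R+1} Pc" using Pc_cont R by simp
      fix t assume t: "R < t" "t < R + 1"
      then have t0: "t > 0" "t \<ge> R0" using R by auto
      have "t^(n-1) * ((u t)^2 * gg n \<omega> p q (u t)) < 0"
        using Z[OF t0(2)] t0 pos[of t] by (simp add: mult_pos_neg)
      then show "\<exists>y. (Pc has_real_derivative y) (at t) \<and> y < 0" using Pc_deriv_gg[OF t0(1)] by auto
    qed simp
    have s3: "0 \<le> Pc (R + 1)"
    proof (rule tendsto_upperbound[OF Pc_decay])
      show "eventually (\<lambda>s. Pc s \<le> Pc (R + 1)) at_top"
        using eventually_ge_at_top[of "R + 1"] by eventually_elim (use nonincr R in auto)
    qed simp
    show ?thesis using s1 s2 s3 by simp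
  qed
qed

end

theorem corollary3p2:
  fixes n :: nat and p q \<omega> :: real and u u' u'' :: "real \<Rightarrow> real"
  assumes n: "n \<ge> 1"
    and pq: "1 < p" "p < q"
    and om: "0 < \<omega>" "\<omega> < omega_pq p q"
    and pos: "\<And>r. r \<ge> 0 \<Longrightarrow> u r > 0"
    and d1: "\<And>r. r \<ge> 0 \<Longrightarrow> (u has_real_derivative u' r) (at r within {0..})"
    and d2: "\<And>r. r > 0 \<Longrightarrow> (u' has_real_derivative u'' r) (at r)"
    and ode: "\<And>r. r > 0 \<Longrightarrow> u'' r + (real n - 1) / r * u' r + nonlin \<omega> p q (u r) = 0"
    and init: "u' 0 = 0"
    and lim: "(u \<longlongrightarrow> 0) at_top"
  shows "\<forall>r > 0. Pohozaev n \<omega> p q u u' r > 0"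
proof (intro allI impI)
  fix r :: real assume r: "r > 0"
  have loc: "ode n p q \<omega> u u' u''"
    unfolding ode_def using assms by blast
  have "Pohozaev n \<omega> p q u u' r = ode.Pc n p q \<omega> u u' r"
    unfolding Pohozaev_def ode.Pc_def[OF loc]
    using Prim_eq[OF pq om(1), of "u r"] pos[of r] r by simp
  then show "Pohozaev n \<omega> p q u u' r > 0" using ode.P_pos[OF loc r] by simp
qed


end
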